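(* Suppose $k_n\sim n^a$ for some $0<a<1$, and that for some $0\le\delta<1-a$ there exist $\theta_{0n}=(\theta_{10n},\dots,\theta_{K(n)0n})$ with $\|f_{\theta_{0n}}-f_0\|_2=o(n^{-\delta})$ and $\sum_{i=1}^{K(n)}\theta_{i0n}^2=o(n^{1-\delta})$. With $\omega_n=(\theta_n,\rho)$, $\sigma_\rho=\log(1+e^\rho)$ and $\kappa>0$, let $$N_{\kappa/n^\delta}=\Big\{\omega_n:\tfrac12\log\tfrac{\sigma_\rho^2}{\sigma_0^2}-\tfrac12\Big(1-\tfrac{\sigma_0^2}{\sigma_\rho^2}\Big)+\tfrac1{2\sigma_\rho^2}\int(f_{\theta_n}(\mathbf x)-f_0(\mathbf x))^2d\mathbf x<\kappa/n^\delta\Big\}.$$ Then for every $\kappa>0$ and $\tilde\kappa>0$, with prior $p(\omega_n)=(2\pi\eta^2)^{-1/2}e^{-\rho^2/(2\eta^2)}\prod_{i=1}^{K(n)}(2\pi\zeta^2)^{-1/2}e^{-\theta_{in}^2/(2\zeta^2)}$, we have $\int_{N_{\kappa/n^\delta}}p(\omega_n)d\omega_n\ge e^{-\tilde\kappa n^{1-\delta}}$ for all sufficiently large $n$.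
   Context: $f_0$ is square integrable on $[0,1]^p$ ($p$ fixed), $\sigma_0>0$, and $\|\cdot\|_2$ is the $L_2([0,1]^p)$ norm. $\psi(u)=1/(1+e^{-u})$, $f_{\theta_n}(\mathbf x)=\beta_0+\sum_{j=1}^{k_n}\beta_j\psi(\gamma_{j0}+\sum_{h=1}^p\gamma_{jh}x_h)$, $\theta_n=(\theta_{1n},\dots,\theta_{K(n)n})$ all network parameters, $K(n)$ their number. $\eta,\zeta>0$ are fixed. *)

theory Defs
  imports "HOL-Probability.Probability" "HOL-Library.Landau_Symbols"
begin

definition sigmoid :: "real \<Rightarrow> real" where
  "sigmoid u = 1 / (1 + exp (- u))"

text \<open>Number of network parameters: beta_0, beta_1..beta_k, gamma_jh (j=1..k, h=0..p).\<close>
definition nparams :: "nat \<Rightarrow> nat \<Rightarrow> nat" where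
  "nparams p k = 1 + k * (p + 2)"

text \<open>Parameter vector theta :: nat => real, indices 0 ..< nparams p k:
  theta 0 = beta_0, theta j = beta_j (1 \<le> j \<le> k),
  theta (gidx p k j h) = gamma_jh (1 \<le> j \<le> k, 0 \<le> h \<le> p).\<close>
definition gidx :: "nat \<Rightarrow> nat \<Rightarrow> nat \<Rightarrow> nat \<Rightarrow> nat" where
  "gidx p k j h = k + (j - 1) * (p + 1) + h + 1"

text \<open>Inputs x \<in> [0,1]^p are functions nat => real with coordinates x 1, ..., x p.\<close>
definition nnet :: "nat \<Rightarrow> nat \<Rightarrow> (nat \<Rightarrow> real) \<Rightarrow> (nat \<Rightarrow> real) \<Rightarrow> real" where
  "nnet p k \<theta> x = \<theta> 0 + (\<Sum>j = 1..k. \<theta> j *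
      sigmoid (\<theta> (gidx p k j 0) + (\<Sum>h = 1..p. \<theta> (gidx p k j h) * x h)))"

definition input_space :: "nat \<Rightarrow> (nat \<Rightarrow> real) measure" where
  "input_space p = PiM {1..p} (\<lambda>_. lborel)"

definition unit_cube :: "nat \<Rightarrow> (nat \<Rightarrow> real) set" where
  "unit_cube p = PiE {1..p} (\<lambda>_. {0..1})"

definition sq_int :: "nat \<Rightarrow> ((nat \<Rightarrow> real) \<Rightarrow> real) \<Rightarrow> real" where
  "sq_int p g = (LINT x : unit_cube p | input_space p. (g x)\<^sup>2)"

definition L2dist :: "nat \<Rightarrow> ((nat \<Rightarrow> real) \<Rightarrow> real) \<Rightarrow> ((nat \<Rightarrow> real) \<Rightarrow> real) \<Rightarrow> real" where
  "L2dist p f g = sqrt (sq_int p (\<lambda>x. f x - g x))"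

definition sigma_rho :: "real \<Rightarrow> real" where
  "sigma_rho \<rho> = ln (1 + exp \<rho>)"

definition Nset :: "nat \<Rightarrow> nat \<Rightarrow> real \<Rightarrow> ((nat \<Rightarrow> real) \<Rightarrow> real) \<Rightarrow> real
    \<Rightarrow> ((nat \<Rightarrow> real) \<times> real) set" where
  "Nset p k \<sigma>0 f0 \<epsilon> = {(\<theta>, \<rho>).
      1/2 * ln ((sigma_rho \<rho>)\<^sup>2 / \<sigma>0\<^sup>2) - 1/2 * (1 - \<sigma>0\<^sup>2 / (sigma_rho \<rho>)\<^sup>2)
      + 1 / (2 * (sigma_rho \<rho>)\<^sup>2) * sq_int p (\<lambda>x. nnet p k \<theta> x - f0 x) < \<epsilon>}"

definition param_space :: "nat \<Rightarrow> ((nat \<Rightarrow> real) \<times> real) measure" where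
  "param_space K = PiM {..<K} (\<lambda>_. lborel) \<Otimes>\<^sub>M lborel"

definition prior_density :: "real \<Rightarrow> real \<Rightarrow> nat \<Rightarrow> (nat \<Rightarrow> real) \<times> real \<Rightarrow> real" where
  "prior_density \<eta> \<zeta> K \<omega> = (case \<omega> of (\<theta>, \<rho>) \<Rightarrow>
      (2 * pi * \<eta>\<^sup>2) powr (-1/2) * exp (- \<rho>\<^sup>2 / (2 * \<eta>\<^sup>2)) *
      (\<Prod>i<K. (2 * pi * \<zeta>\<^sup>2) powr (-1/2) * exp (- (\<theta> i)\<^sup>2 / (2 * \<zeta>\<^sup>2))))"

end

theory Submission
  imports Defs "HOL-Real_Asymp.Real_Asymp"
begin

lemma onepexp_pos: "0 < 1 + exp (x::real)"
  by (simp add: add_pos_pos)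

lemma sigmoid_bounds: "0 < sigmoid u" "sigmoid u < 1"
  unfolding sigmoid_def by (auto simp: divide_simps add_pos_pos)

lemma sigmoid_abs: "\<bar>sigmoid u\<bar> \<le> 1"
  using sigmoid_bounds[of u] by auto

lemma sigmoid_deriv: "(sigmoid has_real_derivative exp (-u) / (1 + exp (-u))^2) (at u)"
  unfolding sigmoid_def
  using onepexp_pos[of "-u"]
  apply -
  apply (rule derivative_eq_intros refl | simp)+
  apply (auto simp: divide_simps power2_eq_square)
  done

lemma sigmoid_deriv_le: "exp (-(u::real)) / (1 + exp (-u))^2 \<le> 1"
proof -
  have "(1 + exp (-u))^2 = 1 + 2*exp(-u) + (exp (-u))^2" by (simp add: power2_eq_square algebra_simps)
  moreover have "0 \<le> (exp (-u))^2" "0 < exp (-u)" by auto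
  ultimately have "exp (-u) \<le> (1 + exp (-u))^2" by linarith
  thus ?thesis using onepexp_pos[of "-u"] by (simp add: divide_simps)
qed

lemma sigmoid_lip_aux: "v < u \<Longrightarrow> \<bar>sigmoid u - sigmoid v\<bar> \<le> u - v"
proof -
  assume "v < u"
  from MVT2[OF this, of sigmoid "\<lambda>u. exp (-u) / (1 + exp (-u))^2"] sigmoid_deriv
  obtain z where z: "sigmoid u - sigmoid v = (u - v) * (exp (-z) / (1 + exp (-z))^2)" by blast
  define d where "d = exp (-z) / (1 + exp (-z))^2"
  have "0 \<le> d" "d \<le> 1" unfolding d_def using sigmoid_deriv_le[of z] by auto
  moreover have "sigmoid u - sigmoid v = (u - v) * d" using z d_def by simp
  ultimately show ?thesis using \<open>v < u\<close>
    by (simp add: abs_mult mult_left_le)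
qed

lemma sigmoid_lip: "\<bar>sigmoid u - sigmoid v\<bar> \<le> \<bar>u - v\<bar>"
  using sigmoid_lip_aux[of v u] sigmoid_lip_aux[of u v]
  by (cases "v < u"; cases "u < v") (auto simp: abs_minus_commute)


lemma gidx_lt:
  assumes "1 \<le> j" "j \<le> k" "h \<le> p"
  shows "gidx p k j h < nparams p k"
proof -
  have "(j - 1) * (p + 1) \<le> (k - 1) * (p + 1)" using assms by (intro mult_le_mono1) auto
  moreover have "(k - 1) * (p + 1) + p + 1 + k = k * (p + 2)" using assms
    by (cases k) (auto simp: algebra_simps)
  ultimately show ?thesis using assms unfolding gidx_def nparams_def by linarith
qed

lemma j_lt: "j \<le> k \<Longrightarrow> j < nparams p k"
  unfolding nparams_def by (cases k) auto

lemma nnet_pert: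
  assumes x: "\<And>h. h \<in> {1..p} \<Longrightarrow> 0 \<le> x h \<and> x h \<le> 1"
    and hw: "\<And>i. i < nparams p k \<Longrightarrow> \<bar>\<theta> i - \<theta>0 i\<bar> \<le> w"
  shows "\<bar>nnet p k \<theta> x - nnet p k \<theta>0 x\<bar> \<le> w * (1 + k + (p+1) * (\<Sum>j=1..k. \<bar>\<theta>0 j\<bar>))"
proof -
  define A where "A t j = t (gidx p k j 0) + (\<Sum>h = 1..p. t (gidx p k j h) * x h)" for t j
  have w0: "0 \<le> w" using hw[of 0] unfolding nparams_def by auto
  have dA: "\<bar>A \<theta> j - A \<theta>0 j\<bar> \<le> w * (1 + p)" if j: "1 \<le> j" "j \<le> k" for j
  proof -
    have "A \<theta> j - A \<theta>0 j = (\<theta> (gidx p k j 0) - \<theta>0 (gidx p k j 0))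
        + (\<Sum>h = 1..p. (\<theta> (gidx p k j h) - \<theta>0 (gidx p k j h)) * x h)"
      unfolding A_def by (simp add: algebra_simps sum_subtractf)
    also have "\<bar>\<dots>\<bar> \<le> w + (\<Sum>h = 1..p. w)"
    proof (rule order.trans[OF abs_triangle_ineq add_mono])
      show "\<bar>\<theta> (gidx p k j 0) - \<theta>0 (gidx p k j 0)\<bar> \<le> w"
        using hw gidx_lt j by auto
      have "\<bar>\<Sum>h = 1..p. (\<theta> (gidx p k j h) - \<theta>0 (gidx p k j h)) * x h\<bar>
          \<le> (\<Sum>h = 1..p. \<bar>(\<theta> (gidx p k j h) - \<theta>0 (gidx p k j h)) * x h\<bar>)"
        by (rule sum_abs)
      also have "\<dots> \<le> (\<Sum>h = 1..p. w)"
      proof (rule sum_mono)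
        fix h assume h: "h \<in> {1..p}"
        have "\<bar>\<theta> (gidx p k j h) - \<theta>0 (gidx p k j h)\<bar> \<le> w" using hw gidx_lt j h by auto
        moreover have "\<bar>x h\<bar> \<le> 1" using x[OF h] by auto
        ultimately show "\<bar>(\<theta> (gidx p k j h) - \<theta>0 (gidx p k j h)) * x h\<bar> \<le> w"
          unfolding abs_mult using mult_mono[of "\<bar>\<theta> (gidx p k j h) - \<theta>0 (gidx p k j h)\<bar>" w "\<bar>x h\<bar>" 1] w0 by simp
      qed
      finally show "\<bar>\<Sum>h = 1..p. (\<theta> (gidx p k j h) - \<theta>0 (gidx p k j h)) * x h\<bar> \<le> (\<Sum>h = 1..p. w)" .
    qed
    finally show ?thesis by (simp add: algebra_simps)
  qed
  have dT: "\<bar>\<theta> j * sigmoid (A \<theta> j) - \<theta>0 j * sigmoid (A \<theta>0 j)\<bar> \<le> w + \<bar>\<theta>0 j\<bar> * (w * (1 + p))"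
    if j: "1 \<le> j" "j \<le> k" for j
  proof -
    have "\<theta> j * sigmoid (A \<theta> j) - \<theta>0 j * sigmoid (A \<theta>0 j)
       = (\<theta> j - \<theta>0 j) * sigmoid (A \<theta> j) + \<theta>0 j * (sigmoid (A \<theta> j) - sigmoid (A \<theta>0 j))"
      by (simp add: algebra_simps)
    also have "\<bar>\<dots>\<bar> \<le> \<bar>(\<theta> j - \<theta>0 j) * sigmoid (A \<theta> j)\<bar> + \<bar>\<theta>0 j * (sigmoid (A \<theta> j) - sigmoid (A \<theta>0 j))\<bar>"
      by (rule abs_triangle_ineq)
    also have "\<dots> \<le> w + \<bar>\<theta>0 j\<bar> * (w * (1 + p))"
    proof (rule add_mono)
      have "\<bar>\<theta> j - \<theta>0 j\<bar> \<le> w" using hw j_lt j by auto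
      thus "\<bar>(\<theta> j - \<theta>0 j) * sigmoid (A \<theta> j)\<bar> \<le> w"
        unfolding abs_mult using sigmoid_abs[of "A \<theta> j"]
          mult_mono[of "\<bar>\<theta> j - \<theta>0 j\<bar>" w "\<bar>sigmoid (A \<theta> j)\<bar>" 1] w0 by simp
      have "\<bar>sigmoid (A \<theta> j) - sigmoid (A \<theta>0 j)\<bar> \<le> w * (1 + p)"
        using sigmoid_lip dA[OF j] order.trans by blast
      thus "\<bar>\<theta>0 j * (sigmoid (A \<theta> j) - sigmoid (A \<theta>0 j))\<bar> \<le> \<bar>\<theta>0 j\<bar> * (w * (1 + p))"
        unfolding abs_mult by (intro mult_left_mono) auto
    qed
    finally show ?thesis .
  qed
  have "nnet p k \<theta> x - nnet p k \<theta>0 x = (\<theta> 0 - \<theta>0 0) +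
     (\<Sum>j=1..k. \<theta> j * sigmoid (A \<theta> j) - \<theta>0 j * sigmoid (A \<theta>0 j))"
    unfolding nnet_def A_def by (simp add: sum_subtractf)
  also have "\<bar>\<dots>\<bar> \<le> w + (\<Sum>j=1..k. w + \<bar>\<theta>0 j\<bar> * (w * (1 + p)))"
  proof (rule order.trans[OF abs_triangle_ineq add_mono])
    show "\<bar>\<theta> 0 - \<theta>0 0\<bar> \<le> w" using hw[of 0] unfolding nparams_def by auto
    show "\<bar>\<Sum>j=1..k. \<theta> j * sigmoid (A \<theta> j) - \<theta>0 j * sigmoid (A \<theta>0 j)\<bar>
        \<le> (\<Sum>j=1..k. w + \<bar>\<theta>0 j\<bar> * (w * (1 + p)))"
      by (rule order.trans[OF sum_abs sum_mono]) (use dT in auto)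
  qed
  also have "\<dots> = w * (1 + k + (p+1) * (\<Sum>j=1..k. \<bar>\<theta>0 j\<bar>))"
    by (simp add: sum.distrib sum_distrib_left sum_distrib_right algebra_simps)
  finally show ?thesis by (simp add: add.commute)
qed

lemma abs_le_sq: "\<bar>t::real\<bar> \<le> 1 + t\<^sup>2"
proof (cases "\<bar>t\<bar> \<le> 1")
  case True thus ?thesis by (simp add: add_increasing2)
next
  case False
  hence "\<bar>t\<bar> * 1 \<le> \<bar>t\<bar> * \<bar>t\<bar>" by (intro mult_left_mono) auto
  thus ?thesis by (simp add: power2_eq_square abs_mult_self_eq)
qed

lemma sum_abs_le:
  "(\<Sum>j=1..k. \<bar>\<theta>0 j\<bar>) \<le> real (nparams p k) + (\<Sum>i<nparams p k. (\<theta>0 i)\<^sup>2)"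
proof -
  have "(\<Sum>j=1..k. \<bar>\<theta>0 j\<bar>) \<le> (\<Sum>i<nparams p k. \<bar>\<theta>0 i\<bar>)"
    by (rule sum_mono2) (auto simp: j_lt)
  also have "\<dots> \<le> (\<Sum>i<nparams p k. 1 + (\<theta>0 i)\<^sup>2)"
  proof (rule sum_mono)
    fix i show "\<bar>\<theta>0 i\<bar> \<le> 1 + (\<theta>0 i)\<^sup>2" by (rule abs_le_sq)
  qed
  also have "\<dots> = real (nparams p k) + (\<Sum>i<nparams p k. (\<theta>0 i)\<^sup>2)"
    by (simp add: sum.distrib)
  finally show ?thesis .
qed


lemma cube_sets: "unit_cube p \<in> sets (input_space p)"
  unfolding unit_cube_def input_space_def by (intro sets_PiM_I_finite) auto

lemma cube_emeasure: "emeasure (input_space p) (unit_cube p) = 1"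
proof -
  interpret product_sigma_finite "\<lambda>_. lborel" by standard
  show ?thesis unfolding unit_cube_def input_space_def
    by (subst emeasure_PiM) auto
qed

lemma cube_measure: "measure (input_space p) (unit_cube p) = 1"
  using cube_emeasure by (simp add: measure_def)

lemma nnet_meas: "nnet p k \<theta> \<in> borel_measurable (input_space p)"
  unfolding nnet_def input_space_def sigmoid_def
  by (intro borel_measurable_add borel_measurable_sum borel_measurable_times borel_measurable_divide
      borel_measurable_exp borel_measurable_uminus measurable_component_singleton
      borel_measurable_const) auto

lemma nnet_bounded: "\<bar>nnet p k \<theta> x\<bar> \<le> \<bar>\<theta> 0\<bar> + (\<Sum>j=1..k. \<bar>\<theta> j\<bar>)"
proof -
  have "\<bar>nnet p k \<theta> x\<bar> \<le> \<bar>\<theta> 0\<bar> + \<bar>\<Sum>j = 1..k. \<theta> j *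
      sigmoid (\<theta> (gidx p k j 0) + (\<Sum>h = 1..p. \<theta> (gidx p k j h) * x h))\<bar>"
    unfolding nnet_def by (rule abs_triangle_ineq)
  also have "\<dots> \<le> \<bar>\<theta> 0\<bar> + (\<Sum>j=1..k. \<bar>\<theta> j\<bar>)"
  proof (rule add_left_mono, rule order.trans[OF sum_abs sum_mono])
    fix j show "\<bar>\<theta> j * sigmoid (\<theta> (gidx p k j 0) + (\<Sum>h = 1..p. \<theta> (gidx p k j h) * x h))\<bar> \<le> \<bar>\<theta> j\<bar>"
      unfolding abs_mult using sigmoid_abs mult_left_le abs_ge_zero by blast
  qed
  finally show ?thesis .
qed

context
  fixes p :: nat and f0 :: "(nat \<Rightarrow> real) \<Rightarrow> real"
  assumes f0_meas: "f0 \<in> borel_measurable (input_space p)"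
    and f0_sq: "set_integrable (input_space p) (unit_cube p) (\<lambda>x. (f0 x)\<^sup>2)"
begin

lemma const_integrable: "set_integrable (input_space p) (unit_cube p) (\<lambda>x. c::real)"
  unfolding set_integrable_def using cube_emeasure[of p] cube_sets[of p]
  by (intro integrable_scaleR_left integrable_indicator) auto

lemma sq_integrable:
  assumes g: "g \<in> borel_measurable (input_space p)" and B: "\<And>x. \<bar>g x\<bar> \<le> B"
  shows "set_integrable (input_space p) (unit_cube p) (\<lambda>x. (g x - f0 x)\<^sup>2)"
proof -
  have i: "set_integrable (input_space p) (unit_cube p) (\<lambda>x. 2 * B\<^sup>2 + 2 * (f0 x)\<^sup>2)"
    by (intro set_integral_add(1) const_integrable set_integrable_mult_right f0_sq)
  show ?thesis
    unfolding set_integrable_def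
  proof (rule Bochner_Integration.integrable_bound)
    show "integrable (input_space p) (\<lambda>x. indicator (unit_cube p) x *\<^sub>R (2 * B\<^sup>2 + 2 * (f0 x)\<^sup>2))"
      using i unfolding set_integrable_def .
    show "(\<lambda>x. indicator (unit_cube p) x *\<^sub>R (g x - f0 x)\<^sup>2) \<in> borel_measurable (input_space p)"
      using g f0_meas cube_sets by measurable
    show "AE x in input_space p. norm (indicator (unit_cube p) x *\<^sub>R (g x - f0 x)\<^sup>2)
        \<le> norm (indicator (unit_cube p) x *\<^sub>R (2 * B\<^sup>2 + 2 * (f0 x)\<^sup>2))"
    proof (rule AE_I2)
      fix x
      have "(g x - f0 x)\<^sup>2 \<le> 2 * (g x)\<^sup>2 + 2 * (f0 x)\<^sup>2"
        using sum_squares_ge_zero[of "g x + f0 x" 0] by (simp add: power2_eq_square algebra_simps)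
      moreover have "(g x)\<^sup>2 \<le> B\<^sup>2" using B[of x] by (metis abs_ge_zero power2_abs power_mono)
      ultimately show "norm (indicator (unit_cube p) x *\<^sub>R (g x - f0 x)\<^sup>2)
        \<le> norm (indicator (unit_cube p) x *\<^sub>R (2 * B\<^sup>2 + 2 * (f0 x)\<^sup>2))"
        by (auto simp: indicator_def)
    qed
  qed
qed

lemma sq_int_nonneg: "0 \<le> sq_int p g"
  unfolding sq_int_def set_lebesgue_integral_def by (intro integral_nonneg_AE) auto

lemma sq_int_pert:
  assumes g: "g \<in> borel_measurable (input_space p)" "\<And>x. \<bar>g x\<bar> \<le> Bg"
    and h: "h \<in> borel_measurable (input_space p)" "\<And>x. \<bar>h x\<bar> \<le> Bh"
    and D: "\<And>x. x \<in> unit_cube p \<Longrightarrow> \<bar>g x - h x\<bar> \<le> D"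
  shows "sq_int p (\<lambda>x. g x - f0 x) \<le> 2 * sq_int p (\<lambda>x. h x - f0 x) + 2 * D\<^sup>2"
proof -
  have ih: "set_integrable (input_space p) (unit_cube p) (\<lambda>x. (h x - f0 x)\<^sup>2)"
    by (rule sq_integrable[OF h])
  have "sq_int p (\<lambda>x. g x - f0 x) \<le> (LINT x : unit_cube p | input_space p. 2 * (h x - f0 x)\<^sup>2 + 2 * D\<^sup>2)"
    unfolding sq_int_def
  proof (rule set_integral_mono)
    show "set_integrable (input_space p) (unit_cube p) (\<lambda>x. (g x - f0 x)\<^sup>2)"
      by (rule sq_integrable[OF g])
    show "set_integrable (input_space p) (unit_cube p) (\<lambda>x. 2 * (h x - f0 x)\<^sup>2 + 2 * D\<^sup>2)"
      by (intro set_integral_add(1) const_integrable set_integrable_mult_right ih)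
    fix x assume x: "x \<in> unit_cube p"
    have "(g x - f0 x)\<^sup>2 \<le> 2 * (h x - f0 x)\<^sup>2 + 2 * (g x - h x)\<^sup>2"
      using sum_squares_ge_zero[of "(h x - f0 x) - (g x - h x)" 0] by (simp add: power2_eq_square algebra_simps)
    moreover have "(g x - h x)\<^sup>2 \<le> D\<^sup>2" using D[OF x] by (metis abs_ge_zero power2_abs power_mono)
    ultimately show "(g x - f0 x)\<^sup>2 \<le> 2 * (h x - f0 x)\<^sup>2 + 2 * D\<^sup>2" by linarith
  qed
  also have "\<dots> = 2 * sq_int p (\<lambda>x. h x - f0 x) + 2 * D\<^sup>2"
    unfolding sq_int_def
    using ih const_integrable cube_measure
    by (subst set_integral_add(2)) (auto simp: set_integral_const[OF cube_sets] cube_emeasure)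
  finally show ?thesis .
qed

end


lemma sigma_rho_bounds:
  fixes \<sigma>0 t \<rho> :: real
  assumes "0 < \<sigma>0" "0 \<le> t" "ln (exp \<sigma>0 - 1) \<le> \<rho>" "\<rho> \<le> ln (exp \<sigma>0 - 1) + \<sigma>0 * t"
  shows "\<sigma>0 \<le> sigma_rho \<rho>" "sigma_rho \<rho> \<le> \<sigma>0 * (1 + t)"
proof -
  define \<rho>0 where "\<rho>0 = ln (exp \<sigma>0 - 1)"
  have e1: "1 < exp \<sigma>0" using assms by simp
  have er0: "exp \<rho>0 = exp \<sigma>0 - 1" unfolding \<rho>0_def using e1 by simp
  have "\<rho>0 \<le> \<rho>" using assms \<rho>0_def by simp
  hence "exp \<rho>0 \<le> exp \<rho>" by (simp only: exp_le_cancel_iff)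
  hence "ln (1 + exp \<rho>0) \<le> ln (1 + exp \<rho>)" by (simp add: add_pos_pos)
  thus "\<sigma>0 \<le> sigma_rho \<rho>" unfolding sigma_rho_def er0 by simp
  have "exp \<rho> \<le> exp (\<rho>0 + \<sigma>0 * t)" using assms \<rho>0_def by simp
  also have "\<dots> = exp \<rho>0 * exp (\<sigma>0 * t)" by (simp add: exp_add)
  finally have f1: "exp \<rho> \<le> exp \<rho>0 * exp (\<sigma>0 * t)" .
  have f2: "1 \<le> exp (\<sigma>0 * t)" using assms by simp
  have f3: "exp (\<sigma>0 * t) * (1 + exp \<rho>0) = exp (\<sigma>0 * t) + exp \<rho>0 * exp (\<sigma>0 * t)"
    by (simp add: algebra_simps)
  have "1 + exp \<rho> \<le> exp (\<sigma>0 * t) * (1 + exp \<rho>0)"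
    unfolding f3 using f1 f2 by linarith
  hence "ln (1 + exp \<rho>) \<le> ln (exp (\<sigma>0 * t) * (1 + exp \<rho>0))"
    by (simp add: add_pos_pos)
  also have "\<dots> = \<sigma>0 * t + \<sigma>0" using er0 e1 by (simp add: ln_mult)
  finally show "sigma_rho \<rho> \<le> \<sigma>0 * (1 + t)" unfolding sigma_rho_def by (simp add: algebra_simps)
qed

lemma Nset_mem:
  fixes \<sigma>0 t \<rho> \<epsilon> :: real
  assumes "0 < \<sigma>0" "0 \<le> t" "ln (exp \<sigma>0 - 1) \<le> \<rho>" "\<rho> \<le> ln (exp \<sigma>0 - 1) + \<sigma>0 * t"
    and Q0: "0 \<le> sq_int p (\<lambda>x. nnet p k \<theta> x - f0 x)"
    and Q: "t + sq_int p (\<lambda>x. nnet p k \<theta> x - f0 x) / (2 * \<sigma>0\<^sup>2) < \<epsilon>"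
  shows "(\<theta>, \<rho>) \<in> Nset p k \<sigma>0 f0 \<epsilon>"
proof -
  define s where "s = sigma_rho \<rho>"
  define q where "q = sq_int p (\<lambda>x. nnet p k \<theta> x - f0 x)"
  have s: "\<sigma>0 \<le> s" "s \<le> \<sigma>0 * (1 + t)" using sigma_rho_bounds[OF assms(1-4)] s_def by auto
  have sp: "0 < s" using s assms by linarith
  have "ln (s\<^sup>2 / \<sigma>0\<^sup>2) = 2 * ln (s / \<sigma>0)"
    using sp assms by (simp add: power_divide[symmetric] ln_realpow)
  also have "ln (s / \<sigma>0) \<le> s / \<sigma>0 - 1" using sp assms by (intro ln_le_minus_one) auto
  also have "s / \<sigma>0 - 1 \<le> t" using s assms by (simp add: field_simps)
  finally have l: "1/2 * ln (s\<^sup>2 / \<sigma>0\<^sup>2) \<le> t" by linarith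
  have "\<sigma>0\<^sup>2 \<le> s\<^sup>2" using s assms by (intro power_mono) auto
  hence m: "0 \<le> 1/2 * (1 - \<sigma>0\<^sup>2 / s\<^sup>2)" using sp by (simp add: field_simps)
  have "q / (2 * s\<^sup>2) \<le> q / (2 * \<sigma>0\<^sup>2)"
    using \<open>\<sigma>0\<^sup>2 \<le> s\<^sup>2\<close> Q0 assms sp unfolding q_def
    by (intro divide_left_mono) auto
  hence "1 / (2 * s\<^sup>2) * q \<le> q / (2 * \<sigma>0\<^sup>2)" by simp
  hence "1/2 * ln (s\<^sup>2 / \<sigma>0\<^sup>2) - 1/2 * (1 - \<sigma>0\<^sup>2 / s\<^sup>2) + 1 / (2 * s\<^sup>2) * q < \<epsilon>"
    using l m Q unfolding q_def by linarith
  thus ?thesis unfolding Nset_def s_def q_def by simp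
qed


lemma box_meas:
  fixes c :: "nat \<Rightarrow> real" and w :: real and r0 r1 :: real
  assumes "0 \<le> w" "r0 \<le> r1"
  shows "emeasure (param_space K) (PiE {..<K} (\<lambda>i. {c i - w .. c i + w}) \<times> {r0..r1})
     = ennreal ((2*w)^K * (r1 - r0))"
proof -
  interpret product_sigma_finite "\<lambda>_. lborel" by standard
  have "emeasure (param_space K) (PiE {..<K} (\<lambda>i. {c i - w .. c i + w}) \<times> {r0..r1})
     = emeasure (PiM {..<K} (\<lambda>_. lborel)) (PiE {..<K} (\<lambda>i. {c i - w .. c i + w})) * emeasure lborel {r0..r1}"
    unfolding param_space_def
    by (rule lborel.emeasure_pair_measure_Times) (auto intro!: sets_PiM_I_finite)
  also have "\<dots> = (\<Prod>i<K. ennreal (2*w)) * ennreal (r1 - r0)"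
    using assms by (subst emeasure_PiM) auto
  also have "(\<Prod>i<K. ennreal (2*w)) = ennreal ((2*w)^K)"
    using assms by (simp add: ennreal_power)
  also have "ennreal ((2*w)^K) * ennreal (r1 - r0) = ennreal ((2*w)^K * (r1 - r0))"
    using assms by (simp add: ennreal_mult)
  finally show ?thesis .
qed

lemma box_sets: "PiE {..<K} (\<lambda>i. {c i - w .. c i + w}) \<times> {r0..r1} \<in> sets (param_space K)"
  unfolding param_space_def by (intro pair_measureI sets_PiM_I_finite) auto

lemma per_n:
  fixes p k :: nat and f0 :: "(nat \<Rightarrow> real) \<Rightarrow> real" and \<sigma>0 \<eta> \<zeta> w t \<epsilon> T0 :: real
    and \<theta>0 :: "nat \<Rightarrow> real"
  assumes f0_meas: "f0 \<in> borel_measurable (input_space p)"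
    and f0_sq: "set_integrable (input_space p) (unit_cube p) (\<lambda>x. (f0 x)\<^sup>2)"
    and \<sigma>0: "\<sigma>0 > 0" and \<eta>: "\<eta> > 0" and \<zeta>: "\<zeta> > 0"
    and w: "0 < w" "w \<le> 1" and t: "0 < t" "t \<le> T0"
    and Qb: "t + (2 * sq_int p (\<lambda>x. nnet p k \<theta>0 x - f0 x) +
       2 * (w * ((1 + p) * (1 + k + real (nparams p k) + (\<Sum>i<nparams p k. (\<theta>0 i)\<^sup>2))))\<^sup>2) / (2 * \<sigma>0\<^sup>2) < \<epsilon>"
  shows "(\<integral>\<^sup>+ \<omega> \<in> Nset p k \<sigma>0 f0 \<epsilon>.
        ennreal (prior_density \<eta> \<zeta> (nparams p k) \<omega>) \<partial>param_space (nparams p k))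
    \<ge> ennreal ((2 * pi * \<eta>\<^sup>2) powr (-1/2) * exp (- (\<bar>ln (exp \<sigma>0 - 1)\<bar> + \<sigma>0 * T0)\<^sup>2 / (2 * \<eta>\<^sup>2))
        * (\<Prod>i<nparams p k. (2 * pi * \<zeta>\<^sup>2) powr (-1/2) * exp (- ((\<theta>0 i)\<^sup>2 + 1) / \<zeta>\<^sup>2))
        * ((2 * w) ^ nparams p k * (\<sigma>0 * t)))"
proof -
  define K where "K = nparams p k"
  define S where "S = (\<Sum>i<K. (\<theta>0 i)\<^sup>2)"
  define M where "M = (1 + p) * (1 + k + real K + S)"
  define \<rho>0 where "\<rho>0 = ln (exp \<sigma>0 - 1)"
  define B where "B = PiE {..<K} (\<lambda>i. {\<theta>0 i - w .. \<theta>0 i + w})"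
  define R where "R = {\<rho>0 .. \<rho>0 + \<sigma>0 * t}"
  define L where "L = (2 * pi * \<eta>\<^sup>2) powr (-1/2) * exp (- (\<bar>\<rho>0\<bar> + \<sigma>0 * T0)\<^sup>2 / (2 * \<eta>\<^sup>2))
        * (\<Prod>i<K. (2 * pi * \<zeta>\<^sup>2) powr (-1/2) * exp (- ((\<theta>0 i)\<^sup>2 + 1) / \<zeta>\<^sup>2))"
  have S0: "0 \<le> S" unfolding S_def by (intro sum_nonneg) auto
  have L0: "0 \<le> L" unfolding L_def by (intro mult_nonneg_nonneg prod_nonneg) auto
  have Qb': "t + (2 * sq_int p (\<lambda>x. nnet p k \<theta>0 x - f0 x) + 2 * (w * M)\<^sup>2) / (2 * \<sigma>0\<^sup>2) < \<epsilon>"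
    using Qb unfolding M_def S_def K_def by simp
  have key: "(\<theta>, \<rho>) \<in> Nset p k \<sigma>0 f0 \<epsilon> \<and> L \<le> prior_density \<eta> \<zeta> K (\<theta>, \<rho>)"
    if th: "\<theta> \<in> B" and rh: "\<rho> \<in> R" for \<theta> \<rho>
  proof
    have thi: "\<bar>\<theta> i - \<theta>0 i\<bar> \<le> w" if "i < K" for i
    proof -
      have "\<theta>0 i - w \<le> \<theta> i \<and> \<theta> i \<le> \<theta>0 i + w" using th that unfolding B_def by (auto simp: PiE_iff)
      thus ?thesis by (simp add: abs_le_iff)
    qed
    have D: "\<bar>nnet p k \<theta> x - nnet p k \<theta>0 x\<bar> \<le> w * M" if x: "x \<in> unit_cube p" for x
    proof -
      have "\<bar>nnet p k \<theta> x - nnet p k \<theta>0 x\<bar> \<le> w * (1 + real k + (real p + 1) * (\<Sum>j=1..k. \<bar>\<theta>0 j\<bar>))"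
        using x thi unfolding K_def unit_cube_def by (intro nnet_pert) (auto simp: PiE_iff)
      also have "\<dots> \<le> w * M"
      proof (rule mult_left_mono)
        have "(\<Sum>j=1..k. \<bar>\<theta>0 j\<bar>) \<le> K + S" using sum_abs_le[where k=k and p=p] unfolding K_def S_def .
        hence "(real p + 1) * (\<Sum>j=1..k. \<bar>\<theta>0 j\<bar>) \<le> (real p + 1) * (K + S)" by (intro mult_left_mono) auto
        moreover have e: "M = (1 + real k) + (real p * (1 + real k)) + (real p + 1) * (K + S)"
          unfolding M_def by (simp add: algebra_simps)
        moreover have "0 \<le> real p * (1 + real k)" by simp
        ultimately show "1 + real k + (real p + 1) * (\<Sum>j=1..k. \<bar>\<theta>0 j\<bar>) \<le> M"
          by linarith
      qed (use w in auto)
      finally show ?thesis .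
    qed
    have "sq_int p (\<lambda>x. nnet p k \<theta> x - f0 x) \<le> 2 * sq_int p (\<lambda>x. nnet p k \<theta>0 x - f0 x) + 2 * (w * M)\<^sup>2"
      by (rule sq_int_pert[OF f0_meas f0_sq nnet_meas nnet_bounded nnet_meas nnet_bounded D])
    hence "sq_int p (\<lambda>x. nnet p k \<theta> x - f0 x) / (2 * \<sigma>0\<^sup>2) \<le>
        (2 * sq_int p (\<lambda>x. nnet p k \<theta>0 x - f0 x) + 2 * (w * M)\<^sup>2) / (2 * \<sigma>0\<^sup>2)"
      using \<sigma>0 by (intro divide_right_mono) auto
    hence "t + sq_int p (\<lambda>x. nnet p k \<theta> x - f0 x) / (2 * \<sigma>0\<^sup>2) < \<epsilon>" using Qb' by linarith
    thus "(\<theta>, \<rho>) \<in> Nset p k \<sigma>0 f0 \<epsilon>"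
      using rh \<sigma>0 t unfolding R_def \<rho>0_def
      by (intro Nset_mem sq_int_nonneg[OF f0_meas f0_sq]) auto
    have r: "\<rho>\<^sup>2 \<le> (\<bar>\<rho>0\<bar> + \<sigma>0 * T0)\<^sup>2"
    proof -
      have "\<bar>\<rho>\<bar> \<le> \<bar>\<rho>0\<bar> + \<sigma>0 * T0"
      proof -
        have "\<sigma>0 * t \<le> \<sigma>0 * T0" using t \<sigma>0 by (intro mult_left_mono) auto
        moreover have "\<rho>0 \<le> \<rho>" "\<rho> \<le> \<rho>0 + \<sigma>0 * t" using rh unfolding R_def by auto
        moreover have "- \<bar>\<rho>0\<bar> \<le> \<rho>0" "\<rho>0 \<le> \<bar>\<rho>0\<bar>" "0 \<le> \<sigma>0 * t" using \<sigma>0 t by auto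
        ultimately show ?thesis by (simp only: abs_le_iff) linarith
      qed
      thus ?thesis by (metis abs_ge_zero power2_abs power_mono)
    qed
    have e1: "exp (- (\<bar>\<rho>0\<bar> + \<sigma>0 * T0)\<^sup>2 / (2 * \<eta>\<^sup>2)) \<le> exp (- \<rho>\<^sup>2 / (2 * \<eta>\<^sup>2))"
      using r \<eta> by (simp add: divide_right_mono)
    have e2: "(\<Prod>i<K. (2 * pi * \<zeta>\<^sup>2) powr (-1/2) * exp (- ((\<theta>0 i)\<^sup>2 + 1) / \<zeta>\<^sup>2))
        \<le> (\<Prod>i<K. (2 * pi * \<zeta>\<^sup>2) powr (-1/2) * exp (- (\<theta> i)\<^sup>2 / (2 * \<zeta>\<^sup>2)))"
    proof (rule prod_mono, rule conjI)
      fix i assume "i \<in> {..<K}"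
      hence d: "\<bar>\<theta> i - \<theta>0 i\<bar> \<le> 1" using thi w by force
      have "\<bar>\<theta> i\<bar> \<le> \<bar>\<theta>0 i\<bar> + 1" using d by linarith
      hence "(\<theta> i)\<^sup>2 \<le> (\<bar>\<theta>0 i\<bar> + 1)\<^sup>2" by (metis abs_ge_zero power2_abs power_mono)
      also have "\<dots> \<le> 2 * ((\<theta>0 i)\<^sup>2 + 1)"
        using sum_squares_ge_zero[of "\<bar>\<theta>0 i\<bar> - 1" 0]
        by (simp add: power2_eq_square algebra_simps abs_mult_self_eq)
      finally have "(\<theta> i)\<^sup>2 / (2 * \<zeta>\<^sup>2) \<le> ((\<theta>0 i)\<^sup>2 + 1) / \<zeta>\<^sup>2"
        using \<zeta> by (simp add: field_simps)
      moreover have "- ((\<theta>0 i)\<^sup>2 + 1) / \<zeta>\<^sup>2 = - (((\<theta>0 i)\<^sup>2 + 1) / \<zeta>\<^sup>2)"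
        "- (\<theta> i)\<^sup>2 / (2 * \<zeta>\<^sup>2) = - ((\<theta> i)\<^sup>2 / (2 * \<zeta>\<^sup>2))" by (simp_all only: minus_divide_left)
      ultimately have "exp (- ((\<theta>0 i)\<^sup>2 + 1) / \<zeta>\<^sup>2) \<le> exp (- (\<theta> i)\<^sup>2 / (2 * \<zeta>\<^sup>2))"
        by (simp only: exp_le_cancel_iff)
      thus "(2 * pi * \<zeta>\<^sup>2) powr (-1/2) * exp (- ((\<theta>0 i)\<^sup>2 + 1) / \<zeta>\<^sup>2)
          \<le> (2 * pi * \<zeta>\<^sup>2) powr (-1/2) * exp (- (\<theta> i)\<^sup>2 / (2 * \<zeta>\<^sup>2))"
        by (intro mult_left_mono) auto
    qed auto
    show "L \<le> prior_density \<eta> \<zeta> K (\<theta>, \<rho>)"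
      unfolding L_def prior_density_def using e1 e2
      by (auto intro!: mult_mono prod_nonneg)
  qed
  have "(\<integral>\<^sup>+ \<omega>. ennreal L * indicator (B \<times> R) \<omega> \<partial>param_space K)
     \<le> (\<integral>\<^sup>+ \<omega> \<in> Nset p k \<sigma>0 f0 \<epsilon>. ennreal (prior_density \<eta> \<zeta> K \<omega>) \<partial>param_space K)"
  proof (rule nn_integral_mono)
    fix \<omega> :: "(nat \<Rightarrow> real) \<times> real"
    obtain \<theta> \<rho> where om: "\<omega> = (\<theta>, \<rho>)" by fastforce
    show "ennreal L * indicator (B \<times> R) \<omega> \<le> ennreal (prior_density \<eta> \<zeta> K \<omega>) * indicator (Nset p k \<sigma>0 f0 \<epsilon>) \<omega>"
      using key[of \<theta> \<rho>] unfolding om by (auto simp: indicator_def intro: ennreal_leI)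
  qed
  moreover have "(\<integral>\<^sup>+ \<omega>. ennreal L * indicator (B \<times> R) \<omega> \<partial>param_space K)
      = ennreal L * ennreal ((2 * w) ^ K * (\<sigma>0 * t))"
    unfolding B_def R_def
    using w t \<sigma>0 by (subst nn_integral_cmult_indicator[OF box_sets], subst box_meas) auto
  moreover have "ennreal L * ennreal ((2 * w) ^ K * (\<sigma>0 * t)) = ennreal (L * ((2 * w) ^ K * (\<sigma>0 * t)))"
    using L0 by (rule ennreal_mult[symmetric]) (use w t \<sigma>0 in auto)
  ultimately show ?thesis unfolding L_def K_def \<rho>0_def by simp
qed


lemma final_real:
  fixes x A S cz C0 c1 \<tau> M P w t tt \<sigma>0 \<zeta> \<kappa>' a \<delta> :: real and K :: nat
  assumes x: "1 \<le> x" and A: "0 < A" and KA: "real K \<le> A * x powr a"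
    and S0: "0 \<le> S" and Sb: "S / \<zeta>\<^sup>2 \<le> \<kappa>' * x powr (1 - \<delta>) / 4"
    and cz: "0 < cz" and C0: "0 < C0" and c1: "0 < c1" "c1 \<le> 1"
    and \<tau>: "c1 * x powr (-\<delta>) \<le> \<tau>" and M: "1 \<le> M" "M \<le> P * (1 + 2 * A * x powr a + x)"
    and w: "w = \<tau> / M" and t: "t = tt * x powr (-\<delta>)" and tt: "0 < tt" and \<sigma>0: "0 < \<sigma>0"
    and \<delta>: "0 \<le> \<delta>" and \<zeta>: "0 < \<zeta>"
    and asym: "A * x powr a * ((\<bar>ln 2\<bar> + \<bar>ln c1\<bar> + \<bar>ln cz\<bar> + 1 / \<zeta>\<^sup>2) + \<delta> * ln x
        + ln (P * (1 + 2 * A * x powr a + x))) + \<delta> * ln x + (- ln C0 - ln (\<sigma>0 * tt))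
        \<le> 3/4 * \<kappa>' * x powr (1 - \<delta>)"
  shows "exp (- \<kappa>' * x powr (1 - \<delta>)) \<le> C0 * (cz ^ K * exp (- (S + real K) / \<zeta>\<^sup>2)) * ((2 * w) ^ K * (\<sigma>0 * t))"
proof -
  define Y where "Y = (\<bar>ln 2\<bar> + \<bar>ln c1\<bar> + \<bar>ln cz\<bar> + 1 / \<zeta>\<^sup>2) + \<delta> * ln x + ln (P * (1 + 2 * A * x powr a + x))"
  have xp: "0 < x" using x by simp
  have lx: "0 \<le> ln x" using x by simp
  have xd: "0 < x powr (-\<delta>)" using xp by simp
  have "0 < c1 * x powr (-\<delta>)" using c1 xd by (intro mult_pos_pos)
  hence \<tau>p: "0 < \<tau>" using \<tau> by linarith
  have wp: "0 < w" unfolding w using \<tau>p M by simp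
  have tp: "0 < t" unfolding t using tt xd by simp
  have lnM: "0 \<le> ln M" "ln M \<le> ln (P * (1 + 2 * A * x powr a + x))" using M by auto
  have Y0: "0 \<le> Y" unfolding Y_def using lnM \<delta> lx by (smt (verit) mult_nonneg_nonneg zero_le_divide_iff zero_le_power2)
  have l\<tau>: "ln c1 - \<delta> * ln x \<le> ln \<tau>"
  proof -
    have "ln (c1 * x powr (-\<delta>)) \<le> ln \<tau>" using \<tau> c1 xd \<tau>p by (subst ln_le_cancel_iff) auto
    moreover have "ln (c1 * x powr (-\<delta>)) = ln c1 - \<delta> * ln x" using c1 xp by (simp add: ln_mult ln_powr)
    ultimately show ?thesis by simp
  qed
  have l2w: "ln (2 * w) = ln 2 + ln \<tau> - ln M" unfolding w using \<tau>p M by (simp add: ln_mult ln_div)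
  have lt: "ln (\<sigma>0 * t) = ln (\<sigma>0 * tt) - \<delta> * ln x" unfolding t using \<sigma>0 tt xp by (simp add: ln_mult ln_powr)
  have inner: "- Y \<le> ln cz - 1 / \<zeta>\<^sup>2 + ln (2 * w)"
    unfolding Y_def l2w using l\<tau> lnM by (smt (verit) abs_ge_self abs_minus_le_zero)
  have KY: "- (A * x powr a * Y) \<le> real K * (ln cz - 1 / \<zeta>\<^sup>2 + ln (2 * w))"
  proof -
    have "- (A * x powr a * Y) \<le> - real K * Y" using mult_right_mono[OF KA Y0] by simp
    also have "\<dots> \<le> real K * (ln cz - 1 / \<zeta>\<^sup>2 + ln (2 * w))" using mult_left_mono[OF inner, of "real K"] by simp
    finally show ?thesis .
  qed
  define V where "V = C0 * (cz ^ K * exp (- (S + real K) / \<zeta>\<^sup>2)) * ((2 * w) ^ K * (\<sigma>0 * t))"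
  have Vp: "0 < V" unfolding V_def using C0 cz wp tp \<sigma>0 by simp
  have lnV: "ln V = ln C0 + real K * (ln cz - 1 / \<zeta>\<^sup>2 + ln (2 * w)) - S / \<zeta>\<^sup>2 + ln (\<sigma>0 * t)"
    unfolding V_def using C0 cz wp tp \<sigma>0
    by (simp add: ln_mult ln_realpow algebra_simps diff_divide_distrib add_divide_distrib)
  have asym': "A * x powr a * Y + \<delta> * ln x + (- ln C0 - ln (\<sigma>0 * tt)) \<le> 3/4 * \<kappa>' * x powr (1 - \<delta>)"
    using asym unfolding Y_def .
  have h1: "(- \<kappa>') * x powr (1 - \<delta>) = - (\<kappa>' * x powr (1 - \<delta>))"
    "3/4 * \<kappa>' * x powr (1 - \<delta>) = 3/4 * (\<kappa>' * x powr (1 - \<delta>))"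
    "\<kappa>' * x powr (1 - \<delta>) / 4 = (\<kappa>' * x powr (1 - \<delta>)) / 4" by simp_all
  have "- \<kappa>' * x powr (1 - \<delta>) \<le> ln V"
    using lnV KY lt asym' Sb h1 by linarith
  hence "exp (- \<kappa>' * x powr (1 - \<delta>)) \<le> exp (ln V)" by (simp only: exp_le_cancel_iff)
  also have "exp (ln V) = V" using Vp by simp
  finally show ?thesis unfolding V_def .
qed


theorem proposition8:
  fixes p :: nat and f0 :: "(nat \<Rightarrow> real) \<Rightarrow> real" and \<sigma>0 \<eta> \<zeta> a \<delta> :: real
    and k :: "nat \<Rightarrow> nat"
  assumes f0_meas: "f0 \<in> borel_measurable (input_space p)"
    and f0_sq: "set_integrable (input_space p) (unit_cube p) (\<lambda>x. (f0 x)\<^sup>2)"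
    and \<sigma>0: "\<sigma>0 > 0" and \<eta>: "\<eta> > 0" and \<zeta>: "\<zeta> > 0"
    and a: "0 < a" "a < 1"
    and kn: "(\<lambda>n. real (k n)) \<sim>[at_top] (\<lambda>n. real n powr a)"
    and \<delta>: "0 \<le> \<delta>" "\<delta> < 1 - a"
    and approx: "\<exists>\<theta>0 :: nat \<Rightarrow> nat \<Rightarrow> real.
        (\<lambda>n. L2dist p (nnet p (k n) (\<theta>0 n)) f0) \<in> o[at_top](\<lambda>n. real n powr (- \<delta>)) \<and>
        (\<lambda>n. \<Sum>i<nparams p (k n). (\<theta>0 n i)\<^sup>2) \<in> o[at_top](\<lambda>n. real n powr (1 - \<delta>))"
  shows "\<forall>\<kappa> > 0. \<forall>\<kappa>' > 0. \<forall>\<^sub>F n in at_top.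
    (\<integral>\<^sup>+ \<omega> \<in> Nset p (k n) \<sigma>0 f0 (\<kappa> / real n powr \<delta>).
        ennreal (prior_density \<eta> \<zeta> (nparams p (k n)) \<omega>) \<partial>param_space (nparams p (k n)))
      \<ge> ennreal (exp (- \<kappa>' * real n powr (1 - \<delta>)))"
proof (intro allI impI)
  fix \<kappa> \<kappa>' :: real assume \<kappa>: "\<kappa> > 0" and \<kappa>': "\<kappa>' > 0"
  from approx obtain \<theta>0 :: "nat \<Rightarrow> nat \<Rightarrow> real" where
    h1: "(\<lambda>n. L2dist p (nnet p (k n) (\<theta>0 n)) f0) \<in> o[at_top](\<lambda>n. real n powr (- \<delta>))" and
    h2: "(\<lambda>n. \<Sum>i<nparams p (k n). (\<theta>0 n i)\<^sup>2) \<in> o[at_top](\<lambda>n. real n powr (1 - \<delta>))"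
    by blast
  define c1 where "c1 = min 1 (\<sigma>0\<^sup>2 * \<kappa> / 8)"
  have c1: "0 < c1" "c1 \<le> 1" "c1 \<le> \<sigma>0\<^sup>2 * \<kappa> / 8" unfolding c1_def using \<sigma>0 \<kappa> by auto
  obtain ck where ck: "ck > 0" and Ek: "eventually (\<lambda>n. norm (real (k n)) \<le> ck * norm (real n powr a)) at_top"
    using landau_o.bigE[OF asymp_equiv_imp_bigo[OF kn]] by blast
  define A where "A = 1 + ck * (real p + 2)"
  define P where "P = 1 + real p"
  define cz where "cz = (2 * pi * \<zeta>\<^sup>2) powr (-1/2)"
  define tt where "tt = \<kappa> / 4"
  define C0 where "C0 = (2 * pi * \<eta>\<^sup>2) powr (-1/2) * exp (- (\<bar>ln (exp \<sigma>0 - 1)\<bar> + \<sigma>0 * tt)\<^sup>2 / (2 * \<eta>\<^sup>2))"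
  have A: "0 < A" unfolding A_def using ck by (simp add: add_pos_nonneg)
  have P: "0 < P" unfolding P_def by simp
  have cz: "0 < cz" unfolding cz_def using \<zeta> by simp
  have C0: "0 < C0" unfolding C0_def using \<eta> by simp
  have tt: "0 < tt" unfolding tt_def using \<kappa> by simp
  have Ea: "eventually (\<lambda>x::real. A * x powr a * ((\<bar>ln 2\<bar> + \<bar>ln c1\<bar> + \<bar>ln cz\<bar> + 1 / \<zeta>\<^sup>2) + \<delta> * ln x
        + ln (P * (1 + 2 * A * x powr a + x))) + \<delta> * ln x + (- ln C0 - ln (\<sigma>0 * tt))
        \<le> 3/4 * \<kappa>' * x powr (1 - \<delta>)) at_top"
    using a \<delta> \<kappa>' A P by real_asymp
  have Ea': "eventually (\<lambda>n. A * real n powr a * ((\<bar>ln 2\<bar> + \<bar>ln c1\<bar> + \<bar>ln cz\<bar> + 1 / \<zeta>\<^sup>2) + \<delta> * ln (real n)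
        + ln (P * (1 + 2 * A * real n powr a + real n))) + \<delta> * ln (real n) + (- ln C0 - ln (\<sigma>0 * tt))
        \<le> 3/4 * \<kappa>' * real n powr (1 - \<delta>)) at_top"
    using eventually_compose_filterlim[OF Ea filterlim_real_sequentially] by simp
  have E2: "eventually (\<lambda>n. norm (L2dist p (nnet p (k n) (\<theta>0 n)) f0) \<le> c1 * norm (real n powr (- \<delta>))) at_top"
    using landau_o.smallD[OF h1 c1(1)] .
  have z: "0 < \<zeta>\<^sup>2 * \<kappa>' / 4" using \<zeta> \<kappa>' by simp
  have E3: "eventually (\<lambda>n. norm (\<Sum>i<nparams p (k n). (\<theta>0 n i)\<^sup>2) \<le> (\<zeta>\<^sup>2 * \<kappa>' / 4) * norm (real n powr (1 - \<delta>))) at_top"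
    using landau_o.smallD[OF h2 z] .
  have E4: "eventually (\<lambda>n. norm (\<Sum>i<nparams p (k n). (\<theta>0 n i)\<^sup>2) \<le> 1 * norm (real n powr (1 - \<delta>))) at_top"
    using landau_o.smallD[OF h2, of 1] by simp
  have E1: "eventually (\<lambda>n. (1::nat) \<le> n) at_top" by (rule eventually_ge_at_top)
  show "\<forall>\<^sub>F n in at_top.
    (\<integral>\<^sup>+ \<omega> \<in> Nset p (k n) \<sigma>0 f0 (\<kappa> / real n powr \<delta>).
        ennreal (prior_density \<eta> \<zeta> (nparams p (k n)) \<omega>) \<partial>param_space (nparams p (k n)))
      \<ge> ennreal (exp (- \<kappa>' * real n powr (1 - \<delta>)))"
    using E1 E2 E3 E4 Ek Ea'
  proof eventually_elim
    case (elim n)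
    define x where "x = real n"
    define K where "K = nparams p (k n)"
    define S where "S = (\<Sum>i<K. (\<theta>0 n i)\<^sup>2)"
    define e where "e = x powr (- \<delta>)"
    define \<epsilon> where "\<epsilon> = \<kappa> / real n powr \<delta>"
    define t where "t = \<epsilon> / 4"
    define \<tau> where "\<tau> = min 1 (\<sigma>0\<^sup>2 * \<epsilon> / 8)"
    define M where "M = (1 + real p) * (1 + real (k n) + real K + S)"
    define w where "w = \<tau> / M"
    define X where "X = x powr (1 - \<delta>)"
    have x: "1 \<le> x" unfolding x_def using elim(1) by simp
    have xp: "0 < x" using x by simp
    have ep: "0 < e" unfolding e_def using xp by simp
    have e1: "e \<le> 1" unfolding e_def using x \<delta> by (simp add: powr_minus_divide ge_one_powr_ge_zero)
    have \<epsilon>e: "\<epsilon> = \<kappa> * e" unfolding \<epsilon>_def e_def x_def by (simp add: powr_minus_divide)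
    have \<epsilon>p: "0 < \<epsilon>" unfolding \<epsilon>e using \<kappa> ep by simp
    have tte: "t = tt * e" unfolding t_def tt_def \<epsilon>e by simp
    have S0: "0 \<le> S" unfolding S_def by (intro sum_nonneg) auto
    have SX: "S \<le> (\<zeta>\<^sup>2 * \<kappa>' / 4) * X" using elim(3) S0 unfolding S_def K_def X_def x_def by simp
    have Sx: "S \<le> x"
    proof -
      have "S \<le> X" using elim(4) S0 unfolding S_def K_def X_def x_def by simp
      also have "X \<le> x powr 1" unfolding X_def using x \<delta> by (intro powr_mono) auto
      finally show ?thesis using xp by simp
    qed
    have xa: "1 \<le> x powr a" using x a by (simp add: ge_one_powr_ge_zero)
    have kA: "real (k n) \<le> ck * x powr a" using elim(5) unfolding x_def by simp
    have KA: "real K \<le> A * x powr a"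
    proof -
      have "real K = 1 + real (k n) * (real p + 2)" unfolding K_def nparams_def by (simp add: algebra_simps)
      also have "\<dots> \<le> x powr a + ck * x powr a * (real p + 2)"
        using xa kA by (intro add_mono mult_right_mono) auto
      also have "\<dots> = A * x powr a" unfolding A_def by (simp add: algebra_simps)
      finally show ?thesis .
    qed
    have kK: "real (k n) \<le> real K" unfolding K_def nparams_def by simp
    have M1: "1 \<le> M" unfolding M_def using S0 by (simp add: algebra_simps add_increasing)
    have M2: "M \<le> P * (1 + 2 * A * x powr a + x)"
      unfolding M_def P_def using kK KA Sx by (intro mult_left_mono) auto
    have \<tau>p: "0 < \<tau>" unfolding \<tau>_def using \<sigma>0 \<epsilon>p by simp
    have \<tau>1: "\<tau> \<le> 1" "\<tau> \<le> \<sigma>0\<^sup>2 * \<epsilon> / 8" unfolding \<tau>_def by auto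
    have \<tau>c: "c1 * e \<le> \<tau>"
    proof -
      have "c1 * e \<le> 1" using c1 e1 ep by (metis mult_le_one less_imp_le)
      moreover have "c1 * e \<le> \<sigma>0\<^sup>2 * \<epsilon> / 8" unfolding \<epsilon>e using c1 ep by (simp add: mult_right_mono)
      ultimately show ?thesis unfolding \<tau>_def by simp
    qed
    have wp: "0 < w" "w \<le> 1" unfolding w_def using \<tau>p \<tau>1 M1 by (auto simp: divide_simps)
    have wM: "w * M = \<tau>" unfolding w_def using M1 by simp
    have tp: "0 < t" "t \<le> tt" unfolding tte using tt ep e1 by (auto simp: mult_left_le)
    define L where "L = L2dist p (nnet p (k n) (\<theta>0 n)) f0"
    define q where "q = sq_int p (\<lambda>x. nnet p (k n) (\<theta>0 n) x - f0 x)"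
    have q0: "0 \<le> q" unfolding q_def by (rule sq_int_nonneg[OF f0_meas f0_sq])
    have qL: "q = L\<^sup>2" using q0 unfolding L_def L2dist_def q_def by simp
    have L0: "0 \<le> L" using q0 unfolding L_def L2dist_def q_def by simp
    have Lb: "L \<le> c1 * e" using elim(2) L0 unfolding L_def e_def x_def by simp
    have qb: "q \<le> \<sigma>0\<^sup>2 * \<epsilon> / 8"
    proof -
      have "q \<le> (c1 * e)\<^sup>2" unfolding qL using Lb L0 by (intro power_mono) auto
      also have "\<dots> \<le> c1 * e"
        using c1 ep e1 mult_le_one[of c1 e] by (simp add: power2_eq_square mult_left_le)
      also have "\<dots> \<le> \<sigma>0\<^sup>2 * \<epsilon> / 8" unfolding \<epsilon>e using c1 ep by (simp add: mult_right_mono)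
      finally show ?thesis .
    qed
    have \<tau>sq: "\<tau>\<^sup>2 \<le> \<sigma>0\<^sup>2 * \<epsilon> / 8"
      using \<tau>p \<tau>1 by (smt (verit) mult_left_le power2_eq_square)
    have Qb: "t + (2 * q + 2 * (w * M)\<^sup>2) / (2 * \<sigma>0\<^sup>2) < \<epsilon>"
    proof -
      have "(2 * q + 2 * (w * M)\<^sup>2) / (2 * \<sigma>0\<^sup>2) \<le> (\<sigma>0\<^sup>2 * \<epsilon> / 2) / (2 * \<sigma>0\<^sup>2)"
        unfolding wM using qb \<tau>sq \<sigma>0 by (intro divide_right_mono) auto
      also have "\<dots> = \<epsilon> / 4" using \<sigma>0 by (simp add: field_simps)
      finally show ?thesis unfolding t_def using \<epsilon>p by linarith
    qed
    have I: "(\<integral>\<^sup>+ \<omega> \<in> Nset p (k n) \<sigma>0 f0 \<epsilon>.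
        ennreal (prior_density \<eta> \<zeta> (nparams p (k n)) \<omega>) \<partial>param_space (nparams p (k n)))
      \<ge> ennreal (C0 * (\<Prod>i<K. cz * exp (- ((\<theta>0 n i)\<^sup>2 + 1) / \<zeta>\<^sup>2)) * ((2 * w) ^ K * (\<sigma>0 * t)))"
      unfolding C0_def cz_def K_def
      by (rule per_n[OF f0_meas f0_sq \<sigma>0 \<eta> \<zeta> wp tp]) (use Qb in \<open>simp add: q_def M_def K_def S_def\<close>)
    have prod: "(\<Prod>i<K. cz * exp (- ((\<theta>0 n i)\<^sup>2 + 1) / \<zeta>\<^sup>2)) = cz ^ K * exp (- (S + real K) / \<zeta>\<^sup>2)"
    proof -
      have "(\<Prod>i<K. cz * exp (- ((\<theta>0 n i)\<^sup>2 + 1) / \<zeta>\<^sup>2)) = cz ^ K * (\<Prod>i<K. exp (- ((\<theta>0 n i)\<^sup>2 + 1) / \<zeta>\<^sup>2))"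
        by (simp add: prod.distrib)
      also have "(\<Prod>i<K. exp (- ((\<theta>0 n i)\<^sup>2 + 1) / \<zeta>\<^sup>2)) = exp (\<Sum>i<K. - ((\<theta>0 n i)\<^sup>2 + 1) / \<zeta>\<^sup>2)"
        by (simp add: exp_sum)
      also have "(\<Sum>i<K. - ((\<theta>0 n i)\<^sup>2 + 1) / \<zeta>\<^sup>2) = - (S + real K) / \<zeta>\<^sup>2"
        unfolding S_def by (simp add: sum_divide_distrib[symmetric] sum_subtractf sum_negf)
      finally show ?thesis .
    qed
    have F: "exp (- \<kappa>' * x powr (1 - \<delta>)) \<le> C0 * (cz ^ K * exp (- (S + real K) / \<zeta>\<^sup>2)) * ((2 * w) ^ K * (\<sigma>0 * t))"
    proof (rule final_real[OF x A KA S0 _ cz C0 c1(1,2) _ M1 M2 w_def _ tt \<sigma>0 \<delta>(1) \<zeta>])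
      show "S / \<zeta>\<^sup>2 \<le> \<kappa>' * x powr (1 - \<delta>) / 4" using SX \<zeta> unfolding X_def by (simp add: field_simps)
      show "c1 * x powr - \<delta> \<le> \<tau>" using \<tau>c unfolding e_def .
      show "t = tt * x powr - \<delta>" using tte unfolding e_def .
      show "A * x powr a * (\<bar>ln 2\<bar> + \<bar>ln c1\<bar> + \<bar>ln cz\<bar> + 1 / \<zeta>\<^sup>2 + \<delta> * ln x + ln (P * (1 + 2 * A * x powr a + x))) +
          \<delta> * ln x + (- ln C0 - ln (\<sigma>0 * tt)) \<le> 3 / 4 * \<kappa>' * x powr (1 - \<delta>)"
        using elim(6) unfolding x_def by simp
    qed
    show ?case
      using order.trans[OF ennreal_leI[OF F[unfolded prod[symmetric]]] I]
      unfolding x_def \<epsilon>_def by simp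
  qed
qed

end
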